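(* Let $m\ge1$ and let $\pi\in\mathfrak{S}_{3m}$ avoid $132$ and consist only of $3$-cycles. Index its $3$-cycles as having element sets $\{a_i<b_i<c_i\}$, $i=1,\dots,m$, with $b_1<b_2<\dots<b_m$, and let $D_\pi$ be its associated Dyck word. If the indices $j$ and $j+1$ lie in the same free block of $D_\pi$, then the $3$-cycles on $\{a_j,b_j,c_j\}$ and $\{a_{j+1},b_{j+1},c_{j+1}\}$ are of the same form. Furthermore, if these two $3$-cycles are of different forms, then $D_\pi$ has a hit at position $2j$.
   Context: A permutation avoids $132$ if there are no indices $i<j<k$ with $\pi_i<\pi_k<\pi_j$. A $3$-cycle on elements $a<b<c$ has form $(1,2,3)$ if it is $a\mapsto b\mapsto c\mapsto a$, and form $(1,3,2)$ if it is $a\mapsto c\mapsto b\mapsto a$. With $B=\{b_i\}$ and $C=\{c_i\}$, the associated Dyck word $D_\pi$ is the word of length $2m$ obtained by listing the elements of $B\cup C$ in increasing order and writing $0$ for each element of $B$ and $1$ for each element of $C$. For a Dyck word $D$ of semilength $m$ (a word with $m$ zeros and $m$ ones in which every prefix has at least as many zeros as ones): indices $i$ and $i+1$ ($1\le i<m$) are linked if the $i$-th and $(i+1)$-st $0$ of $D$ occupy adjacent positions and the $i$-th and $(i+1)$-st $1$ of $D$ occupy adjacent positions; the free blocks of $D$ are the maximal intervals of $\{1,\dots,m\}$ in which all consecutive indices are linked. $D$ has a hit at position $2j$ ($0\le j\le m$) if its prefix of length $2j$ contains exactly $j$ zeros and $j$ ones. *)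

theory Defs
  imports "HOL-Combinatorics.Permutations"
begin

definition avoids132 :: "nat \<Rightarrow> (nat \<Rightarrow> nat) \<Rightarrow> bool" where
  "avoids132 n \<pi> \<longleftrightarrow>
     \<not> (\<exists>i j k. 1 \<le> i \<and> i < j \<and> j < k \<and> k \<le> n \<and> \<pi> i < \<pi> k \<and> \<pi> k < \<pi> j)"

definition only_3cycles :: "nat \<Rightarrow> (nat \<Rightarrow> nat) \<Rightarrow> bool" where
  "only_3cycles n \<pi> \<longleftrightarrow>
     (\<forall>x\<in>{1..n}. \<pi> x \<noteq> x \<and> \<pi> (\<pi> x) \<noteq> x \<and> \<pi> (\<pi> (\<pi> x)) = x)"

definition cyc :: "(nat \<Rightarrow> nat) \<Rightarrow> nat \<Rightarrow> nat set" where
  "cyc \<pi> x = {x, \<pi> x, \<pi> (\<pi> x)}"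

definition Bset :: "nat \<Rightarrow> (nat \<Rightarrow> nat) \<Rightarrow> nat set" where
  "Bset n \<pi> = {x\<in>{1..n}. Min (cyc \<pi> x) < x \<and> x < Max (cyc \<pi> x)}"

definition Cset :: "nat \<Rightarrow> (nat \<Rightarrow> nat) \<Rightarrow> nat set" where
  "Cset n \<pi> = {x\<in>{1..n}. x = Max (cyc \<pi> x)}"

definition bel :: "nat \<Rightarrow> (nat \<Rightarrow> nat) \<Rightarrow> nat \<Rightarrow> nat" where
  "bel n \<pi> i = sorted_list_of_set (Bset n \<pi>) ! (i - 1)"

datatype cform = Form123 | Form132

text \<open>Form of the 3-cycle on a<b<c through b: (1,2,3) iff a maps to b, else (1,3,2).\<close>
definition cycle_form :: "(nat \<Rightarrow> nat) \<Rightarrow> nat \<Rightarrow> cform" where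
  "cycle_form \<pi> b = (if \<pi> (Min (cyc \<pi> b)) = b then Form123 else Form132)"

definition dyck_word :: "nat \<Rightarrow> (nat \<Rightarrow> nat) \<Rightarrow> nat list" where
  "dyck_word n \<pi> = map (\<lambda>x. if x \<in> Bset n \<pi> then 0 else 1)
                        (sorted_list_of_set (Bset n \<pi> \<union> Cset n \<pi>))"

text \<open>Position (0-based) in D of the i-th (1-based) occurrence of letter v.\<close>
definition occ_pos :: "nat list \<Rightarrow> nat \<Rightarrow> nat \<Rightarrow> nat" where
  "occ_pos D v i = filter (\<lambda>k. D ! k = v) [0..<length D] ! (i - 1)"

definition semilength :: "nat list \<Rightarrow> nat" where
  "semilength D = length D div 2"

definition linked :: "nat list \<Rightarrow> nat \<Rightarrow> bool" where
  "linked D i \<longleftrightarrow> 1 \<le> i \<and> i < semilength D \<and>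
     occ_pos D 0 (Suc i) = Suc (occ_pos D 0 i) \<and>
     occ_pos D 1 (Suc i) = Suc (occ_pos D 1 i)"

definition free_block :: "nat list \<Rightarrow> nat set \<Rightarrow> bool" where
  "free_block D I \<longleftrightarrow> (\<exists>p q. 1 \<le> p \<and> p \<le> q \<and> q \<le> semilength D \<and> I = {p..q} \<and>
     (\<forall>i. p \<le> i \<and> i < q \<longrightarrow> linked D i) \<and>
     \<not> linked D (p - 1) \<and> \<not> linked D q)"

definition has_hit :: "nat list \<Rightarrow> nat \<Rightarrow> bool" where
  "has_hit D pos \<longleftrightarrow> (\<exists>j. pos = 2 * j \<and> j \<le> semilength D \<and>
     count_list (take (2 * j) D) 0 = j \<and> count_list (take (2 * j) D) 1 = j)"

end

theory Submission
  imports Defs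
begin

locale S3 =
  fixes n :: nat and p :: "nat \<Rightarrow> nat"
  assumes perm: "p permutes {1..n}"
    and o3: "only_3cycles n p"
    and av: "avoids132 n p"
begin

lemma inr: "x \<in> {1..n} \<Longrightarrow> p x \<in> {1..n}"
  using permutes_in_image[OF perm, of x] by blast
lemma ppp: "x \<in> {1..n} \<Longrightarrow> p (p (p x)) = x"
  using o3 unfolding only_3cycles_def by simp

lemma dd: "x \<in> {1..n} \<Longrightarrow> p x \<noteq> x \<and> p (p x) \<noteq> x \<and> p (p x) \<noteq> p x"
proof -
  assume x: "x \<in> {1..n}"
  have "p x \<noteq> x \<and> p (p x) \<noteq> x" using o3 x unfolding only_3cycles_def by blast
  moreover have "p (p (p x)) \<noteq> p x" using o3 inr[OF x] unfolding only_3cycles_def by blast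
  ultimately show ?thesis using ppp[OF x] by metis
qed

lemma Bmem: "x \<in> Bset n p \<longleftrightarrow> x \<in> {1..n} \<and> ((p (p x) < x \<and> x < p x) \<or> (p x < x \<and> x < p (p x)))"
proof (cases "x \<in> {1..n}")
  case True
  have "Min (cyc p x) < x \<and> x < Max (cyc p x) \<longleftrightarrow> (p (p x) < x \<and> x < p x) \<or> (p x < x \<and> x < p (p x))"
    using dd[OF True] unfolding cyc_def by (auto simp: min_def max_def)
  then show ?thesis unfolding Bset_def using True by auto
qed (auto simp add: Bset_def)

lemma Cmem: "x \<in> Cset n p \<longleftrightarrow> x \<in> {1..n} \<and> p x < x \<and> p (p x) < x"
proof (cases "x \<in> {1..n}")
  case True
  have "x = Max (cyc p x) \<longleftrightarrow> p x < x \<and> p (p x) < x"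
    using dd[OF True] unfolding cyc_def by (auto simp: max_def)
  then show ?thesis unfolding Cset_def using True by auto
qed (auto simp add: Cset_def)

lemma form: "b \<in> Bset n p \<Longrightarrow> cycle_form p b = (if b < p b then Form123 else Form132)"
proof -
  assume b: "b \<in> Bset n p"
  hence x: "b \<in> {1..n}" by (simp add: Bmem)
  show ?thesis using b dd[OF x] ppp[OF x] unfolding Bmem cycle_form_def cyc_def
    by (auto simp: min_def)
qed

definition Aset where "Aset = {x\<in>{1..n}. x < p x \<and> x < p (p x)}"
definition g where "g b = max (p b) (p (p b))"
definition h where "h c = max (p c) (p (p c))"
definition ga where "ga a = min (p a) (p (p a))"
definition hb where "hb b = min (p b) (p (p b))"

lemma bijBC: "bij_betw g (Bset n p) (Cset n p)"
proof (rule bij_betw_byWitness[where f'=h])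
  show "\<forall>a\<in>Bset n p. h (g a) = a"
  proof
    fix a assume a: "a \<in> Bset n p"
    hence x: "a \<in> {1..n}" by (simp add: Bmem)
    show "h (g a) = a" using a ppp[OF x] ppp[OF inr[OF x]] unfolding Bmem g_def h_def by (auto simp: max_def)
  qed
  show "\<forall>a\<in>Cset n p. g (h a) = a"
  proof
    fix a assume a: "a \<in> Cset n p"
    hence x: "a \<in> {1..n}" by (simp add: Cmem)
    show "g (h a) = a" using a ppp[OF x] ppp[OF inr[OF x]] dd[OF x] unfolding Cmem g_def h_def by (auto simp: max_def)
  qed
  show "g ` Bset n p \<subseteq> Cset n p"
  proof
    fix y assume "y \<in> g ` Bset n p"
    then obtain a where a: "a \<in> Bset n p" and y: "y = g a" by auto
    hence x: "a \<in> {1..n}" by (simp add: Bmem)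
    show "y \<in> Cset n p" using a y ppp[OF x] ppp[OF inr[OF x]] inr[OF x] inr[OF inr[OF x]] unfolding Bmem Cmem g_def by (auto simp: max_def)
  qed
  show "h ` Cset n p \<subseteq> Bset n p"
  proof
    fix y assume "y \<in> h ` Cset n p"
    then obtain a where a: "a \<in> Cset n p" and y: "y = h a" by auto
    hence x: "a \<in> {1..n}" by (simp add: Cmem)
    show "y \<in> Bset n p" using a y ppp[OF x] ppp[OF inr[OF x]] inr[OF x] inr[OF inr[OF x]] dd[OF x] unfolding Bmem Cmem h_def by (auto simp: max_def)
  qed
qed

lemma bijAB: "bij_betw ga Aset (Bset n p)"
proof (rule bij_betw_byWitness[where f'=hb])
  show "\<forall>a\<in>Aset. hb (ga a) = a"
  proof
    fix a assume a: "a \<in> Aset"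
    hence x: "a \<in> {1..n}" by (simp add: Aset_def)
    show "hb (ga a) = a" using a ppp[OF x] ppp[OF inr[OF x]] unfolding Aset_def ga_def hb_def by (auto simp: min_def)
  qed
  show "\<forall>a\<in>Bset n p. ga (hb a) = a"
  proof
    fix a assume a: "a \<in> Bset n p"
    hence x: "a \<in> {1..n}" by (simp add: Bmem)
    show "ga (hb a) = a" using a ppp[OF x] ppp[OF inr[OF x]] dd[OF x] unfolding Bmem ga_def hb_def by (auto simp: min_def)
  qed
  show "ga ` Aset \<subseteq> Bset n p"
  proof
    fix y assume "y \<in> ga ` Aset"
    then obtain a where a: "a \<in> Aset" and y: "y = ga a" by auto
    hence x: "a \<in> {1..n}" by (simp add: Aset_def)
    show "y \<in> Bset n p" using a y ppp[OF x] ppp[OF inr[OF x]] inr[OF x] inr[OF inr[OF x]] dd[OF x] unfolding Bmem Aset_def ga_def by (auto simp: min_def)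
  qed
  show "hb ` Bset n p \<subseteq> Aset"
  proof
    fix y assume "y \<in> hb ` Bset n p"
    then obtain a where a: "a \<in> Bset n p" and y: "y = hb a" by auto
    hence x: "a \<in> {1..n}" by (simp add: Bmem)
    show "y \<in> Aset" using a y ppp[OF x] ppp[OF inr[OF x]] inr[OF x] inr[OF inr[OF x]] unfolding Bmem Aset_def hb_def by (auto simp: min_def)
  qed
qed

lemma cardB: "3 * card (Bset n p) = n"
proof -
  have u: "{1..n} = Aset \<union> Bset n p \<union> Cset n p"
  proof
    show "{1..n} \<subseteq> Aset \<union> Bset n p \<union> Cset n p"
    proof
      fix x assume x: "x \<in> {1..n}"
      have "x \<in> Aset \<or> x \<in> Bset n p \<or> x \<in> Cset n p" using x dd[OF x] unfolding Aset_def Bmem Cmem mem_Collect_eq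
        by (metis linorder_neqE_nat)
      then show "x \<in> Aset \<union> Bset n p \<union> Cset n p" by blast
    qed
  qed (auto simp: Aset_def Bmem Cmem)
  have fin: "finite Aset" "finite (Bset n p)" "finite (Cset n p)"
    by (auto simp: Aset_def Bset_def Cset_def)
  have "card {1..n} = card Aset + card (Bset n p) + card (Cset n p)"
  proof -
    have "Aset \<inter> Bset n p = {}" "(Aset \<union> Bset n p) \<inter> Cset n p = {}"
      by (auto simp: Aset_def Bmem Cmem)
    then show ?thesis unfolding u using fin by (simp add: card_Un_disjoint)
  qed
  moreover have "card Aset = card (Bset n p)" using bij_betw_same_card[OF bijAB] .
  moreover have "card (Cset n p) = card (Bset n p)" using bij_betw_same_card[OF bijBC] by simp
  ultimately show ?thesis by simp
qed

lemma no132: "\<lbrakk>1 \<le> i; i < j; j < k; k \<le> n; p i < p k; p k < p j\<rbrakk> \<Longrightarrow> False"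
  using av unfolding avoids132_def by blast

lemma pair:
  assumes b: "b \<in> Bset n p" and b': "b' \<in> Bset n p" and lt: "b < b'"
    and df: "(b < p b) \<noteq> (b' < p b')"
  shows "g b < b'"
proof -
  have x: "b \<in> {1..n}" and x': "b' \<in> {1..n}" using b b' by (auto simp: Bmem)
  note f = ppp[OF x] ppp[OF x'] ppp[OF inr[OF x]] ppp[OF inr[OF x']] inr[OF x] inr[OF x']
     inr[OF inr[OF x]] inr[OF inr[OF x']]
  show ?thesis
  proof (cases "b < p b")
    case True
    hence c1: "p (p b) < b" using b by (auto simp: Bmem)
    have c2: "p b' < b'" "b' < p (p b')" using df True b' by (auto simp: Bmem)
    have gb: "g b = p b" using c1 True by (simp add: g_def)
    have ne: "p b \<noteq> b'"
    proof
      assume e: "p b = b'"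
      hence "p (p b') = b" using f by simp
      thus False using c2 lt by simp
    qed
    show ?thesis
    proof (rule ccontr)
      assume "\<not> g b < b'"
      hence "b' < p b" using gb ne by simp
      then show False
        using no132[of "p (p b)" b "p (p b')"] f c1 c2 lt by auto
    qed
  next
    case False
    hence c1: "p b < b" "b < p (p b)" using b by (auto simp: Bmem)
    have c2: "b' < p b'" "p (p b') < b'" using df False b' by (auto simp: Bmem)
    have gb: "g b = p (p b)" using c1 by (simp add: g_def)
    have ne: "p (p b) \<noteq> b'"
    proof
      assume e: "p (p b) = b'"
      hence "p b' = b" using f by metis
      thus False using c2 lt by simp
    qed
    show ?thesis
    proof (rule ccontr)
      assume "\<not> g b < b'"
      hence "b' < p (p b)" using gb ne by simp
      then show False
        using no132[of b b' "p (p b)"] f c1 c2 lt x by auto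
    qed
  qed
qed
end

lemma cnt_map: "distinct xs \<Longrightarrow> count_list (map f xs) v = card ({x. v = f x} \<inter> set xs)"
  by (simp add: count_list_eq_length_filter filter_map distinct_length_filter comp_def)

lemma cl_take: "k \<le> length D \<Longrightarrow> count_list (take k D) v = length (filter (\<lambda>i. D!i = v) [0..<k])"
proof (induction k)
  case (Suc k)
  then show ?case by (simp add: take_Suc_conv_app_nth)
qed simp

lemma ss_take:
  fixes L :: "nat list"
  assumes "sorted_wrt (<) L" "j < length L" "x \<in> set L"
  shows "x < L!j \<longleftrightarrow> x \<in> set (take j L)"
proof -
  obtain i where i: "i < length L" "x = L!i" using assms(3) by (auto simp: in_set_conv_nth)
  have "x < L!j \<longleftrightarrow> i < j"
  proof
    assume "x < L!j"
    show "i < j"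
    proof (rule ccontr)
      assume "\<not> i < j"
      hence "j = i \<or> j < i" by auto
      thus False using sorted_wrt_nth_less[OF assms(1), of j i] i \<open>x < L!j\<close> by auto
    qed
  qed (use sorted_wrt_nth_less[OF assms(1), of i j] i assms(2) in auto)
  also have "\<dots> \<longleftrightarrow> x \<in> set (take j L)"
  proof
    assume ij: "i < j"
    have "take j L ! i = x" using i ij by simp
    moreover have "i < length (take j L)" using ij assms(2) by simp
    ultimately show "x \<in> set (take j L)" by (metis nth_mem)
  next
    assume "x \<in> set (take j L)"
    then obtain k where k: "k < length (take j L)" "x = take j L ! k" by (auto simp: in_set_conv_nth)
    hence "k < j" "x = L!k" using assms(2) by auto
    moreover have "distinct L" using assms(1) strict_sorted_iff by blast
    ultimately show "i < j" using i nth_eq_iff_index_eq[OF \<open>distinct L\<close>, of k i] assms(2) by auto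
  qed
  finally show ?thesis .
qed

lemma ss_le:
  fixes L :: "nat list"
  assumes "sorted_wrt (<) L" "j < length L" "1 \<le> j" "x \<in> set (take j L)"
  shows "x \<le> L!(j-1)"
proof -
  obtain k where k: "k < length (take j L)" "x = take j L ! k" using assms(4) by (auto simp: in_set_conv_nth)
  hence "k < j" "x = L!k" using assms(2) by auto
  show ?thesis
  proof (cases "k = j - 1")
    case True
    then show ?thesis using \<open>x = L!k\<close> by simp
  next
    case False
    with \<open>k < j\<close> have "k < j - 1" by simp
    moreover have "j - 1 < length L" using assms(2) by simp
    ultimately have "L!k < L!(j-1)" using sorted_wrt_nth_less[OF assms(1), of k "j-1"] by blast
    then show ?thesis using \<open>x = L!k\<close> by simp
  qed
qed

lemma nolink:
  assumes "count_list (take (2*j) D) 0 = j" "count_list (take (2*j) D) 1 = j"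
    "count_list D 0 > j" "count_list D 1 > j" "1 \<le> j" "2*j \<le> length D"
  shows "\<not> linked D j"
proof
  assume lk: "linked D j"
  have key: "occ_pos D v (Suc j) = Suc (occ_pos D v j) \<Longrightarrow> D ! (2*j - 1) = v"
    if c1: "count_list (take (2*j) D) v = j" and c2: "count_list D v > j" for v
  proof -
    assume e: "occ_pos D v (Suc j) = Suc (occ_pos D v j)"
    define P where "P = (\<lambda>i. D!i = v)"
    define A where "A = filter P [0..<2*j]"
    define B where "B = filter P [2*j..<length D]"
    have "[0..<length D] = [0..<2*j] @ [2*j..<length D]"
      using upt_add_eq_append[of 0 "2*j" "length D - 2*j"] assms(6) by simp
    hence F: "filter P [0..<length D] = A @ B" by (simp add: A_def B_def)
    have lA: "length A = j" using c1 cl_take[OF assms(6), of v] by (simp add: A_def P_def)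
    have "length (filter P [0..<length D]) > j" using c2 cl_take[of "length D" D v] by (simp add: P_def)
    hence lB: "length B > 0" using F lA by simp
    have o1: "occ_pos D v j = A ! (j-1)" using lA assms(5)
      unfolding occ_pos_def P_def[symmetric] F by (simp add: nth_append)
    have o2: "occ_pos D v (Suc j) = B ! 0"
      unfolding occ_pos_def P_def[symmetric] F using lA by (simp add: nth_append)
    have "A ! (j-1) \<in> set A" using lA assms(5) by simp
    hence a1: "A ! (j-1) < 2*j" "D ! (A ! (j-1)) = v" by (auto simp: A_def P_def)
    have "B ! 0 \<in> set B" using lB by simp
    hence "B ! 0 \<ge> 2*j" by (auto simp: B_def)
    hence "A ! (j-1) = 2*j - 1" using e o1 o2 a1 by simp
    thus ?thesis using a1 by simp
  qed
  have "D ! (2*j-1) = 0" using key[OF assms(1) assms(3)] lk unfolding linked_def by blast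
  moreover have "D ! (2*j-1) = 1" using key[OF assms(2) assms(4)] lk unfolding linked_def by blast
  ultimately show False by simp
qed

context S3 begin

lemma gbig: "b \<in> Bset n p \<Longrightarrow> b < g b"
  by (auto simp: Bmem g_def)

lemma hitlem:
  assumes j: "1 \<le> j" "j < card (Bset n p)"
    and df: "cycle_form p (bel n p j) \<noteq> cycle_form p (bel n p (Suc j))"
  shows "has_hit (dyck_word n p) (2*j) \<and> \<not> linked (dyck_word n p) j"
proof -
  define B where "B = Bset n p"
  define C where "C = Cset n p"
  have finB: "finite B" and finC: "finite C" by (auto simp: B_def C_def Bset_def Cset_def)
  have BC: "B \<inter> C = {}" by (auto simp: B_def C_def Bmem Cmem)
  define L where "L = sorted_list_of_set B"
  have sL: "sorted_wrt (<) L" and setL: "set L = B" and lenL: "length L = card B"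
    using finB by (auto simp: L_def strict_sorted_iff)
  have dL: "distinct L" using sL strict_sorted_iff by blast
  define t where "t = L ! j"
  define s where "s = L ! (j-1)"
  have jl: "j < length L" using j lenL B_def by simp
  have tB: "t \<in> B" using jl setL t_def nth_mem by blast
  have sB: "s \<in> B" using jl setL s_def by (metis less_imp_diff_less nth_mem)
  have st: "s < t" using sorted_wrt_nth_less[OF sL, of "j-1" j] jl j by (simp add: s_def t_def)
  have bt: "bel n p (Suc j) = t" "bel n p j = s" by (simp_all add: bel_def t_def s_def L_def B_def)
  have dfs: "(s < p s) \<noteq> (t < p t)"
    using df form[of s] form[of t] sB tB unfolding bt B_def by (auto split: if_splits)
  define TB where "TB = set (take j L)"
  have TBeq: "TB = {x\<in>B. x < t}"
    using ss_take[OF sL jl] setL unfolding TB_def t_def by (auto dest: in_set_takeD)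
  have cTB: "card TB = j" unfolding TB_def using jl dL by (simp add: distinct_card)
  have gl: "g x < t" if x: "x \<in> TB" for x
  proof -
    have xB: "x \<in> B" and xt: "x < t" using x TBeq by auto
    show ?thesis
    proof (cases "(x < p x) = (t < p t)")
      case False
      then show ?thesis using pair[of x t] xB tB xt B_def by auto
    next
      case True
      hence "(x < p x) \<noteq> (s < p s)" using dfs by simp
      hence "x \<noteq> s" by auto
      moreover have "x \<le> s" using ss_le[OF sL jl j(1)] x unfolding TB_def s_def by simp
      ultimately have "x < s" by simp
      then show ?thesis using pair[of x s] xB sB \<open>(x < p x) \<noteq> (s < p s)\<close> st B_def by fastforce
    qed
  qed
  have gC: "g ` B = C" using bijBC unfolding B_def C_def by (simp add: bij_betw_def)
  have ginj: "inj_on g TB" using bijBC unfolding bij_betw_def B_def[symmetric]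
    by (metis TBeq inj_on_subset mem_Collect_eq subsetI)
  define T where "T = {x\<in>B\<union>C. x < t}"
  have Teq: "T = TB \<union> g ` TB"
  proof
    show "TB \<union> g ` TB \<subseteq> T"
      using gl gC TBeq unfolding T_def by auto
    show "T \<subseteq> TB \<union> g ` TB"
    proof
      fix x assume "x \<in> T"
      hence x: "x \<in> B \<union> C" "x < t" by (auto simp: T_def)
      show "x \<in> TB \<union> g ` TB"
      proof (cases "x \<in> B")
        case True then show ?thesis using x TBeq by auto
      next
        case False
        hence "x \<in> C" using x by auto
        then obtain b where b: "b \<in> B" "x = g b" using gC by auto
        have "b < t" using gbig[of b] b x B_def by auto
        then show ?thesis using b TBeq by auto
      qed
    qed
  qed
  have gTBC: "g ` TB \<subseteq> C" using gC TBeq by auto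
  have cT: "card T = 2 * j"
  proof -
    have "TB \<inter> g ` TB = {}" using gTBC BC TBeq by auto
    moreover have "finite TB" by (simp add: TB_def)
    ultimately have "card T = card TB + card (g ` TB)" unfolding Teq by (simp add: card_Un_disjoint)
    also have "card (g ` TB) = j" using card_image[OF ginj] cTB by simp
    finally show ?thesis using cTB by simp
  qed
  define U where "U = {x\<in>B\<union>C. \<not> x < t}"
  have finT: "finite T" and finU: "finite U" using finB finC by (auto simp: T_def U_def)
  define Ls where "Ls = sorted_list_of_set (B \<union> C)"
  define L1 where "L1 = sorted_list_of_set T"
  define L2 where "L2 = sorted_list_of_set U"
  have s1: "sorted_wrt (<) L1" "set L1 = T" "length L1 = card T" "distinct L1"
    using finT by (auto simp: L1_def strict_sorted_iff)
  have s2: "sorted_wrt (<) L2" "set L2 = U"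
    using finU by (auto simp: L2_def strict_sorted_iff)
  have s3: "sorted_wrt (<) Ls" "set Ls = B \<union> C" "distinct Ls" "length Ls = card (B \<union> C)"
    using finB finC by (auto simp: Ls_def strict_sorted_iff)
  have "Ls = L1 @ L2"
  proof (rule strict_sorted_equal)
    show "sorted_wrt (<) (L1 @ L2)" using s1 s2 unfolding sorted_wrt_append
      by (auto simp: T_def U_def)
    show "sorted_wrt (<) Ls" by (rule s3)
    show "set Ls = set (L1 @ L2)" using s1 s2 s3 by (auto simp: T_def U_def)
  qed
  define f where "f = (\<lambda>x::nat. if x \<in> B then 0::nat else 1)"
  have D: "dyck_word n p = map f Ls" by (simp add: dyck_word_def f_def Ls_def B_def C_def)
  have tk: "take (2*j) (dyck_word n p) = map f L1"
    unfolding D \<open>Ls = L1 @ L2\<close> using s1 cT by simp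
  have c0: "count_list (take (2*j) (dyck_word n p)) 0 = j"
  proof -
    have "{x. 0 = f x} \<inter> T = TB" using Teq gTBC BC TBeq by (auto simp: f_def)
    then show ?thesis unfolding tk using cnt_map[OF s1(4), of f 0] s1 cTB by simp
  qed
  have c1: "count_list (take (2*j) (dyck_word n p)) 1 = j"
  proof -
    have "{x. 1 = f x} \<inter> T = g ` TB" using Teq gTBC BC TBeq by (auto simp: f_def)
    then show ?thesis unfolding tk using cnt_map[OF s1(4), of f 1] s1 card_image[OF ginj] cTB by simp
  qed
  have cardC: "card C = card B" using bij_betw_same_card[OF bijBC] by (simp add: B_def C_def)
  have d0: "count_list (dyck_word n p) 0 = card B"
  proof -
    have "{x. 0 = f x} \<inter> (B \<union> C) = B" by (auto simp: f_def)
    then show ?thesis unfolding D using cnt_map[OF s3(3), of f 0] s3 by simp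
  qed
  have d1: "count_list (dyck_word n p) 1 = card B"
  proof -
    have "{x. 1 = f x} \<inter> (B \<union> C) = C" using BC by (auto simp: f_def)
    then show ?thesis unfolding D using cnt_map[OF s3(3), of f 1] s3 cardC by simp
  qed
  have lenD: "2 * j \<le> length (dyck_word n p)"
  proof -
    have "T \<subseteq> B \<union> C" by (auto simp: T_def)
    hence "card T \<le> card (B \<union> C)" using finB finC by (simp add: card_mono)
    thus ?thesis using cT s3 D by simp
  qed
  have "has_hit (dyck_word n p) (2*j)"
    unfolding has_hit_def semilength_def using c0 c1 lenD by auto
  moreover have "\<not> linked (dyck_word n p) j"
    using nolink[OF c0 c1] d0 d1 j lenD B_def by simp
  ultimately show ?thesis by simp
qed
end

theorem lemma4p2:
  fixes m :: nat and \<pi> :: "nat \<Rightarrow> nat" and j :: nat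
  assumes "m \<ge> 1"
    and "\<pi> permutes {1..3*m}"
    and "avoids132 (3*m) \<pi>"
    and "only_3cycles (3*m) \<pi>"
    and "1 \<le> j" and "j < m"
  shows "((\<exists>I. free_block (dyck_word (3*m) \<pi>) I \<and> j \<in> I \<and> Suc j \<in> I) \<longrightarrow>
            cycle_form \<pi> (bel (3*m) \<pi> j) = cycle_form \<pi> (bel (3*m) \<pi> (Suc j)))
       \<and> (cycle_form \<pi> (bel (3*m) \<pi> j) \<noteq> cycle_form \<pi> (bel (3*m) \<pi> (Suc j)) \<longrightarrow>
            has_hit (dyck_word (3*m) \<pi>) (2*j))"
proof -
  interpret S3 "3*m" \<pi> using assms(2-4) by unfold_locales
  have cB: "card (Bset (3*m) \<pi>) = m" using cardB by simp
  have H: "cycle_form \<pi> (bel (3*m) \<pi> j) \<noteq> cycle_form \<pi> (bel (3*m) \<pi> (Suc j)) \<Longrightarrow>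
     has_hit (dyck_word (3*m) \<pi>) (2*j) \<and> \<not> linked (dyck_word (3*m) \<pi>) j"
    using hitlem[of j] assms(5,6) cB by simp
  have L: "linked (dyck_word (3*m) \<pi>) j" if fb: "free_block (dyck_word (3*m) \<pi>) I" "j \<in> I" "Suc j \<in> I" for I
  proof -
    obtain a b where "I = {a..b}" "\<forall>i. a \<le> i \<and> i < b \<longrightarrow> linked (dyck_word (3*m) \<pi>) i"
      using fb(1) unfolding free_block_def by blast
    then show ?thesis using fb(2,3) by auto
  qed
  show ?thesis using H L by blast
qed
end
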